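(* Let $\hat Q_i:\mathcal X\times\mathcal A\to[0,1]$ and let $\pi_i^{(t)}$, $\bar Q_i^{(t)}$, $\bar\pi$ be produced by the GAMD inner loop (as in the context) for $T$ iterations. Then for every player $i$ and context $x$, $$\hat V_i^{\dagger,\bar\pi_{-i}}(x)-\hat V_i^{\bar\pi}(x)\le\max_{\pi_i\in\Delta(\mathcal A_i)}\frac1T\sum_{t=1}^Tf_{i,x}^{(t)}(\pi_i)-\frac1T\sum_{t=1}^Tf_{i,x}^{(t)}(\pi_i^{(t)}(\cdot|x))\le\mathcal O\!\left(\frac{\eta(1+\log T)}{T}\right),$$ where $f_{i,x}^{(t)}(\pi_i)=\sum_{a_i}\pi_i(a_i)\bar Q_i^{(t)}(x,a_i)-\eta^{-1}\mathrm{KL}(\pi_i\|\pi_i^{\mathrm{ref}}(\cdot|x))$.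
   Context: $m$-player game with contexts $x$, finite action sets $\mathcal A_i$, $\mathcal A=\prod_i\mathcal A_i$, full-support reference policies $\pi_i^{\mathrm{ref}}$, $\eta>0$. GAMD inner loop: $\pi_i^{(1)}=\pi_i^{\mathrm{ref}}$; $\bar Q_i^{(t)}(x,a_i)=\mathbb E_{\boldsymbol a_{-i}\sim\prod_{j\ne i}\pi_j^{(t)}(\cdot|x)}[\hat Q_i(x,a_i,\boldsymbol a_{-i})]$; $\pi_i^{(t+1)}(a_i|x)\propto(\pi_i^{\mathrm{ref}}(a_i|x))^{1/t}(\pi_i^{(t)}(a_i|x))^{(t-1)/t}\exp(\frac\eta t\bar Q_i^{(t)}(x,a_i))$; $\bar\pi(\boldsymbol a|x)=\frac1T\sum_{t=1}^T\prod_i\pi_i^{(t)}(a_i|x)$, with marginals $\bar\pi_i,\bar\pi_{-i}$. Empirical values: for a joint policy $\pi$, $\hat V_i^\pi(x)=\mathbb E_{\boldsymbol a\sim\pi(\cdot|x)}[\hat Q_i(x,\boldsymbol a)]-\eta^{-1}\mathrm{KL}(\pi_i(\cdot|x)\|\pi_i^{\mathrm{ref}}(\cdot|x))$; $\hat V_i^{\dagger,\nu_{-i}}(x)=\max_{\pi_i'}\hat V_i^{(\pi_i',\nu_{-i})}(x)$, where $(\pi_i',\nu_{-i})$ is the joint policy $\pi_i'(a_i|x)\nu_{-i}(\boldsymbol a_{-i}|x)$. $\mathcal O$ hides an absolute constant. *)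

theory Defs
  imports "HOL-Analysis.Analysis"
begin

text \<open>Players are 0,...,m-1. Player i has the finite action set A i (a set over a common
action type).\<close>

definition joint_actions :: "nat \<Rightarrow> (nat \<Rightarrow> 'a set) \<Rightarrow> (nat \<Rightarrow> 'a) set" where
  "joint_actions m A = PiE {..<m} A"

definition other_actions :: "nat \<Rightarrow> (nat \<Rightarrow> 'a set) \<Rightarrow> nat \<Rightarrow> (nat \<Rightarrow> 'a) set" where
  "other_actions m A i = PiE ({..<m} - {i}) A"

definition prob_simplex :: "'a set \<Rightarrow> ('a \<Rightarrow> real) set" where
  "prob_simplex S = {p. (\<forall>a\<in>S. 0 \<le> p a) \<and> (\<Sum>a\<in>S. p a) = 1 \<and> (\<forall>a. a \<notin> S \<longrightarrow> p a = 0)}"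

definition KL :: "'a set \<Rightarrow> ('a \<Rightarrow> real) \<Rightarrow> ('a \<Rightarrow> real) \<Rightarrow> real" where
  "KL S p q = (\<Sum>a\<in>S. if p a = 0 then 0 else p a * ln (p a / q a))"

definition qbar :: "nat \<Rightarrow> (nat \<Rightarrow> 'a set) \<Rightarrow> (nat \<Rightarrow> 'x \<Rightarrow> (nat \<Rightarrow> 'a) \<Rightarrow> real)
    \<Rightarrow> (nat \<Rightarrow> 'x \<Rightarrow> 'a \<Rightarrow> real) \<Rightarrow> nat \<Rightarrow> 'x \<Rightarrow> 'a \<Rightarrow> real" where
  "qbar m A Q P i x ai =
     (\<Sum>b\<in>other_actions m A i. (\<Prod>j\<in>{..<m} - {i}. P j x (b j)) * Q i x (b(i := ai)))"

definition gamd_step :: "nat \<Rightarrow> (nat \<Rightarrow> 'a set) \<Rightarrow> (nat \<Rightarrow> 'x \<Rightarrow> 'a \<Rightarrow> real) \<Rightarrow> real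
    \<Rightarrow> (nat \<Rightarrow> 'x \<Rightarrow> (nat \<Rightarrow> 'a) \<Rightarrow> real) \<Rightarrow> nat
    \<Rightarrow> (nat \<Rightarrow> 'x \<Rightarrow> 'a \<Rightarrow> real) \<Rightarrow> nat \<Rightarrow> 'x \<Rightarrow> 'a \<Rightarrow> real" where
  "gamd_step m A rf \<eta> Q t P i x ai =
     (let w = (\<lambda>b. rf i x b powr (1 / real t) * P i x b powr ((real t - 1) / real t)
                   * exp (\<eta> / real t * qbar m A Q P i x b))
      in w ai / (\<Sum>b\<in>A i. w b))"

text \<open>GAMD iterates: gamd ... t = jp^(t) for t \<ge> 1 (index 0 is unused and set to ref).\<close>
primrec gamd :: "nat \<Rightarrow> (nat \<Rightarrow> 'a set) \<Rightarrow> (nat \<Rightarrow> 'x \<Rightarrow> 'a \<Rightarrow> real) \<Rightarrow> real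
    \<Rightarrow> (nat \<Rightarrow> 'x \<Rightarrow> (nat \<Rightarrow> 'a) \<Rightarrow> real) \<Rightarrow> nat \<Rightarrow> nat \<Rightarrow> 'x \<Rightarrow> 'a \<Rightarrow> real" where
  "gamd m A rf \<eta> Q 0 = rf"
| "gamd m A rf \<eta> Q (Suc t) =
     (if t = 0 then rf else gamd_step m A rf \<eta> Q t (gamd m A rf \<eta> Q t))"

definition pibar :: "nat \<Rightarrow> (nat \<Rightarrow> 'a set) \<Rightarrow> (nat \<Rightarrow> 'x \<Rightarrow> 'a \<Rightarrow> real) \<Rightarrow> real
    \<Rightarrow> (nat \<Rightarrow> 'x \<Rightarrow> (nat \<Rightarrow> 'a) \<Rightarrow> real) \<Rightarrow> nat \<Rightarrow> 'x \<Rightarrow> (nat \<Rightarrow> 'a) \<Rightarrow> real" where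
  "pibar m A rf \<eta> Q T x a =
     (1 / real T) * (\<Sum>t\<in>{1..T}. \<Prod>j\<in>{..<m}. gamd m A rf \<eta> Q t j x (a j))"

definition marg :: "nat \<Rightarrow> (nat \<Rightarrow> 'a set) \<Rightarrow> ((nat \<Rightarrow> 'a) \<Rightarrow> real) \<Rightarrow> nat \<Rightarrow> 'a \<Rightarrow> real" where
  "marg m A jp i ai = (\<Sum>b\<in>other_actions m A i. jp (b(i := ai)))"

definition marg_others :: "nat \<Rightarrow> (nat \<Rightarrow> 'a set) \<Rightarrow> ((nat \<Rightarrow> 'a) \<Rightarrow> real) \<Rightarrow> nat
    \<Rightarrow> (nat \<Rightarrow> 'a) \<Rightarrow> real" where
  "marg_others m A jp i b = (\<Sum>ai\<in>A i. jp (b(i := ai)))"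

definition Vhat :: "nat \<Rightarrow> (nat \<Rightarrow> 'a set) \<Rightarrow> (nat \<Rightarrow> 'x \<Rightarrow> 'a \<Rightarrow> real) \<Rightarrow> real
    \<Rightarrow> (nat \<Rightarrow> 'x \<Rightarrow> (nat \<Rightarrow> 'a) \<Rightarrow> real) \<Rightarrow> nat \<Rightarrow> 'x \<Rightarrow> ((nat \<Rightarrow> 'a) \<Rightarrow> real) \<Rightarrow> real" where
  "Vhat m A rf \<eta> Q i x jp =
     (\<Sum>a\<in>joint_actions m A. jp a * Q i x a) - KL (A i) (marg m A jp i) (rf i x) / \<eta>"

definition Vdag :: "nat \<Rightarrow> (nat \<Rightarrow> 'a set) \<Rightarrow> (nat \<Rightarrow> 'x \<Rightarrow> 'a \<Rightarrow> real) \<Rightarrow> real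
    \<Rightarrow> (nat \<Rightarrow> 'x \<Rightarrow> (nat \<Rightarrow> 'a) \<Rightarrow> real) \<Rightarrow> nat \<Rightarrow> 'x \<Rightarrow> ((nat \<Rightarrow> 'a) \<Rightarrow> real) \<Rightarrow> real" where
  "Vdag m A rf \<eta> Q i x nu =
     (SUP p\<in>prob_simplex (A i). Vhat m A rf \<eta> Q i x
        (\<lambda>a. p (a i) * nu (restrict a ({..<m} - {i}))))"

definition floss :: "nat \<Rightarrow> (nat \<Rightarrow> 'a set) \<Rightarrow> (nat \<Rightarrow> 'x \<Rightarrow> 'a \<Rightarrow> real) \<Rightarrow> real
    \<Rightarrow> (nat \<Rightarrow> 'x \<Rightarrow> (nat \<Rightarrow> 'a) \<Rightarrow> real) \<Rightarrow> nat \<Rightarrow> nat \<Rightarrow> 'x \<Rightarrow> ('a \<Rightarrow> real) \<Rightarrow> real" where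
  "floss m A rf \<eta> Q t i x p =
     (\<Sum>ai\<in>A i. p ai * qbar m A Q (gamd m A rf \<eta> Q t) i x ai) - KL (A i) p (rf i x) / \<eta>"

end

theory Submission
  imports Defs
begin


lemma harm_bound:
  fixes T :: nat assumes "1 \<le> T"
  shows "(\<Sum>t\<in>{1..T}. 1 / real t) \<le> 1 + ln (real T)"
  using assms
proof (induction T rule: dec_induct)
  case base then show ?case by simp
next
  case (step n)
  have n0: "0 < real n" using step by simp
  have "ln (real n / real (Suc n)) \<le> real n / real (Suc n) - 1"
    using n0 by (intro ln_le_minus_one) simp
  also have "\<dots> = - (1 / real (Suc n))" by (simp add: field_simps)
  finally have "1 / real (Suc n) \<le> ln (real (Suc n)) - ln (real n)"
    using n0 by (simp add: ln_div)
  moreover have "{1..Suc n} = insert (Suc n) {1..n}" by auto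
  ultimately show ?case using step by simp
qed

lemma gibbs:
  fixes S :: "'a set" and r v p :: "'a \<Rightarrow> real"
  assumes fin: "finite S" and rpos: "\<And>a. a \<in> S \<Longrightarrow> 0 < r a"
    and p: "p \<in> prob_simplex S" and ne: "S \<noteq> {}"
  shows "(\<Sum>a\<in>S. p a * v a) - KL S p r \<le> ln (\<Sum>a\<in>S. r a * exp (v a))"
proof -
  define Z where "Z = (\<Sum>a\<in>S. r a * exp (v a))"
  have Zpos: "0 < Z" unfolding Z_def using fin ne rpos by (intro sum_pos) auto
  have p0: "\<And>a. a \<in> S \<Longrightarrow> 0 \<le> p a" and p1: "(\<Sum>a\<in>S. p a) = 1"
    using p unfolding prob_simplex_def by auto
  have trm: "p a * v a - (if p a = 0 then 0 else p a * ln (p a / r a)) - p a * ln Z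
      \<le> r a * exp (v a) / Z - p a" if a: "a \<in> S" for a
  proof (cases "p a = 0")
    case True then show ?thesis using rpos[OF a] Zpos by simp
  next
    case False
    then have pp: "0 < p a" using p0[OF a] by simp
    have ra: "0 < r a" using rpos[OF a] .
    have eq: "p a * v a - p a * ln (p a / r a) - p a * ln Z = p a * ln (r a * exp (v a) / (Z * p a))"
      using pp ra Zpos by (simp add: ln_div ln_mult algebra_simps)
    have "ln (r a * exp (v a) / (Z * p a)) \<le> r a * exp (v a) / (Z * p a) - 1"
      using pp ra Zpos by (intro ln_le_minus_one) simp
    then have "p a * ln (r a * exp (v a) / (Z * p a)) \<le> p a * (r a * exp (v a) / (Z * p a) - 1)"
      using pp by (intro mult_left_mono) auto
    also have "\<dots> = r a * exp (v a) / Z - p a" using pp by (simp add: field_simps)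
    finally show ?thesis using False eq by simp
  qed
  have "(\<Sum>a\<in>S. p a * v a - (if p a = 0 then 0 else p a * ln (p a / r a)) - p a * ln Z)
      \<le> (\<Sum>a\<in>S. r a * exp (v a) / Z - p a)"
    using trm by (intro sum_mono) auto
  also have "\<dots> = 0" using Zpos p1 by (simp add: sum_subtractf sum_divide_distrib[symmetric] Z_def)
  finally show ?thesis
    using p1 by (simp add: KL_def sum_subtractf sum_distrib_right[symmetric] Z_def)
qed

lemma kl_avg:
  fixes S :: "'a set" and I :: "nat set" and P :: "nat \<Rightarrow> 'a \<Rightarrow> real"
  assumes fin: "finite S" "finite I" "I \<noteq> {}"
    and rpos: "\<And>a. a \<in> S \<Longrightarrow> 0 < r a"
    and Ppos: "\<And>t a. t \<in> I \<Longrightarrow> a \<in> S \<Longrightarrow> 0 < P t a"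
  shows "KL S (\<lambda>a. (1 / real (card I)) * (\<Sum>t\<in>I. P t a)) r
      \<le> (1 / real (card I)) * (\<Sum>t\<in>I. KL S (P t) r)"
proof -
  define N where "N = real (card I)"
  have N: "0 < N" using fin unfolding N_def by (simp add: card_gt_0_iff)
  have one: "(\<lambda>a. (1/N) * (\<Sum>t\<in>I. P t a)) a * ln ((\<lambda>a. (1/N) * (\<Sum>t\<in>I. P t a)) a / r a)
     \<le> (1/N) * (\<Sum>t\<in>I. P t a * ln (P t a / r a))" if a: "a \<in> S" for a
  proof -
    define pb where "pb = (1/N) * (\<Sum>t\<in>I. P t a)"
    have pbpos: "0 < pb" unfolding pb_def using N fin Ppos a by (intro mult_pos_pos sum_pos) auto
    have ra: "0 < r a" using rpos a by auto
    have key: "P t a * (1 - pb / P t a) \<le> P t a * ln (P t a / r a) - P t a * ln (pb / r a)"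
      if t: "t \<in> I" for t
    proof -
      have Pt: "0 < P t a" using Ppos t a by auto
      have "ln (pb / P t a) \<le> pb / P t a - 1" using Pt pbpos by (intro ln_le_minus_one) simp
      then have "P t a * (1 - pb / P t a) \<le> P t a * (- ln (pb / P t a))"
        using Pt by (intro mult_left_mono) auto
      also have "- ln (pb / P t a) = ln (P t a / r a) - ln (pb / r a)"
        using Pt pbpos ra by (simp add: ln_div)
      finally show ?thesis by (simp add: algebra_simps)
    qed
    have "(\<Sum>t\<in>I. P t a * (1 - pb / P t a)) \<le> (\<Sum>t\<in>I. P t a * ln (P t a / r a) - P t a * ln (pb / r a))"
      using key by (intro sum_mono) auto
    moreover have "(\<Sum>t\<in>I. P t a * (1 - pb / P t a)) = (\<Sum>t\<in>I. P t a) - N * pb"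
    proof -
      have "(\<Sum>t\<in>I. P t a * (1 - pb / P t a)) = (\<Sum>t\<in>I. P t a - pb)"
      proof (intro sum.cong refl)
        fix t assume "t \<in> I"
        then have "P t a \<noteq> 0" using Ppos a by (metis less_irrefl)
        then show "P t a * (1 - pb / P t a) = P t a - pb" by (simp add: field_simps)
      qed
      then show ?thesis by (simp add: sum_subtractf N_def)
    qed
    moreover have "(\<Sum>t\<in>I. P t a) - N * pb = 0" using N unfolding pb_def by simp
    ultimately have "N * pb * ln (pb / r a) \<le> (\<Sum>t\<in>I. P t a * ln (P t a / r a))"
      using N unfolding pb_def by (simp add: sum_subtractf sum_distrib_right[symmetric])
    then have "pb * ln (pb / r a) \<le> (1/N) * (\<Sum>t\<in>I. P t a * ln (P t a / r a))"
      using N by (simp add: field_simps)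
    then show ?thesis unfolding pb_def by simp
  qed
  have "KL S (\<lambda>a. (1/N) * (\<Sum>t\<in>I. P t a)) r
      = (\<Sum>a\<in>S. (\<lambda>a. (1/N) * (\<Sum>t\<in>I. P t a)) a * ln ((\<lambda>a. (1/N) * (\<Sum>t\<in>I. P t a)) a / r a))"
    unfolding KL_def using N fin Ppos
    by (intro sum.cong) (auto dest: sum_pos[of I "\<lambda>t. P t _"])
  also have "\<dots> \<le> (\<Sum>a\<in>S. (1/N) * (\<Sum>t\<in>I. P t a * ln (P t a / r a)))"
    using one by (intro sum_mono) auto
  also have "\<dots> = (1/N) * (\<Sum>t\<in>I. KL S (P t) r)"
    unfolding KL_def sum_distrib_left[symmetric]
    using Ppos by (subst sum.swap) (intro arg_cong[where f="\<lambda>x. (1/N) * x"] sum.cong; force)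
  finally show ?thesis unfolding N_def .
qed

lemma round_bound:
  fixes S :: "'a set" and p d :: "'a \<Rightarrow> real"
  assumes fin: "finite S" and p0: "\<And>a. a \<in> S \<Longrightarrow> 0 \<le> p a" and p1: "(\<Sum>a\<in>S. p a) = 1"
    and dc: "\<And>a. a \<in> S \<Longrightarrow> \<bar>d a\<bar> \<le> c"
  shows "ln (\<Sum>a\<in>S. p a * exp (d a)) - (\<Sum>a\<in>S. p a * d a) \<le> 4 * c\<^sup>2"
proof -
  have dc': "- c \<le> d a" "d a \<le> c" if "a \<in> S" for a using dc[OF that] by (auto simp: abs_le_iff)
  have lo: "exp (- c) \<le> (\<Sum>a\<in>S. p a * exp (d a))"
  proof -
    have "(\<Sum>a\<in>S. p a * exp (- c)) \<le> (\<Sum>a\<in>S. p a * exp (d a))"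
      using p0 dc' by (intro sum_mono mult_left_mono) auto
    then show ?thesis using p1 by (simp add: sum_distrib_right[symmetric])
  qed
  have Mpos: "0 < (\<Sum>a\<in>S. p a * exp (d a))" using lo by (meson exp_gt_zero less_le_trans)
  have md: "- c \<le> (\<Sum>a\<in>S. p a * d a)"
  proof -
    have "(\<Sum>a\<in>S. p a * (- c)) \<le> (\<Sum>a\<in>S. p a * d a)"
      using p0 dc by (intro sum_mono mult_left_mono) (auto simp: dc')
    moreover have "(\<Sum>a\<in>S. p a * (- c)) = - c" using p1 by (simp only: sum_distrib_right[symmetric])
    ultimately show ?thesis by simp
  qed
  show ?thesis
  proof (cases "c \<le> 1/2")
    case False
    have "(\<Sum>a\<in>S. p a * exp (d a)) \<le> (\<Sum>a\<in>S. p a * exp c)"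
      using p0 dc' by (intro sum_mono mult_left_mono) auto
    also have "\<dots> = exp c" using p1 by (simp add: sum_distrib_right[symmetric])
    finally have "ln (\<Sum>a\<in>S. p a * exp (d a)) \<le> c"
      using Mpos by (metis ln_exp ln_le_cancel_iff exp_gt_zero)
    moreover have "2 * c \<le> 4 * c\<^sup>2" using False by (simp add: power2_eq_square)
    ultimately show ?thesis using md by simp
  next
    case True
    define e where "e = (\<lambda>a. d a + c)"
    have e01: "0 \<le> e a" "e a \<le> 1" "e a \<le> 2 * c" if "a \<in> S" for a
      using dc[OF that] True unfolding e_def by (auto simp: abs_le_iff)
    have "(\<Sum>a\<in>S. p a * exp (d a)) = exp (- c) * (\<Sum>a\<in>S. p a * exp (e a))"
      unfolding e_def sum_distrib_left
      by (intro sum.cong refl) (simp add: exp_add[symmetric] algebra_simps)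
    moreover have epos: "0 < (\<Sum>a\<in>S. p a * exp (e a))"
      using Mpos calculation by (simp add: zero_less_mult_iff)
    ultimately have "ln (\<Sum>a\<in>S. p a * exp (d a)) = - c + ln (\<Sum>a\<in>S. p a * exp (e a))"
      by (simp add: ln_mult)
    moreover have "(\<Sum>a\<in>S. p a * exp (e a)) \<le> (\<Sum>a\<in>S. p a * (1 + e a + (e a)\<^sup>2))"
      using p0 e01 by (intro sum_mono mult_left_mono exp_bound) auto
    moreover have "(\<Sum>a\<in>S. p a * (1 + e a + (e a)\<^sup>2)) = 1 + (\<Sum>a\<in>S. p a * e a) + (\<Sum>a\<in>S. p a * (e a)\<^sup>2)"
      using p1 by (simp add: algebra_simps sum.distrib)
    moreover have "(\<Sum>a\<in>S. p a * e a) = (\<Sum>a\<in>S. p a * d a) + c"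
      using p1 unfolding e_def by (simp add: algebra_simps sum.distrib sum_distrib_left[symmetric])
    moreover have "(\<Sum>a\<in>S. p a * (e a)\<^sup>2) \<le> (\<Sum>a\<in>S. p a * (2 * c)\<^sup>2)"
      using p0 e01 by (intro sum_mono mult_left_mono power_mono) auto
    moreover have "(\<Sum>a\<in>S. p a * (2 * c)\<^sup>2) = 4 * c\<^sup>2"
      using p1 by (simp add: sum_distrib_right[symmetric] power2_eq_square)
    moreover have "ln (\<Sum>a\<in>S. p a * exp (e a)) \<le> (\<Sum>a\<in>S. p a * exp (e a)) - 1"
      using epos by (rule ln_le_minus_one)
    ultimately show ?thesis by linarith
  qed
qed

lemma sum_PiE_split:
  assumes "i \<notin> J"
  shows "(\<Sum>a\<in>PiE (insert i J) A. g a) = (\<Sum>ai\<in>A i. \<Sum>b\<in>PiE J A. g (b(i := ai)))"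
proof -
  have inj: "inj_on (\<lambda>(y, g). g(i := y)) (A i \<times> PiE J A)"
  proof (rule inj_onI, clarify)
    fix y g y' g'
    assume g: "g \<in> PiE J A" and g': "g' \<in> PiE J A" and eq: "g(i := y) = g'(i := y')"
    have "y = y'" using fun_cong[OF eq, of i] by simp
    moreover have "g = g'"
    proof
      fix k show "g k = g' k"
      proof (cases "k = i")
        case True then show ?thesis using g g' assms by (auto simp: PiE_def extensional_def)
      next
        case False then show ?thesis using fun_cong[OF eq, of k] by simp
      qed
    qed
    ultimately show "y = y' \<and> g = g'" by simp
  qed
  show ?thesis
    unfolding PiE_insert_eq
    by (subst sum.reindex[OF inj]) (simp add: sum.cartesian_product split_beta)
qed

lemma sum_prod_PiE_one:
  assumes "finite J" "\<And>j. j \<in> J \<Longrightarrow> finite (A j)" "\<And>j. j \<in> J \<Longrightarrow> (\<Sum>a\<in>A j. P j a) = (1::real)"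
  shows "(\<Sum>b\<in>PiE J A. \<Prod>j\<in>J. P j (b j)) = 1"
  using prod_sum_PiE[of J A P, symmetric] assms by simp



primrec th :: "(nat \<Rightarrow> 'a \<Rightarrow> real) \<Rightarrow> nat \<Rightarrow> 'a \<Rightarrow> real" where
  "th q 0 = (\<lambda>a. 0)"
| "th q (Suc t) = (if t = 0 then (\<lambda>a. 0) else (\<lambda>a. ((real t - 1) * th q t a + q t a) / real t))"

lemma th_sum: "real n * th q (Suc n) a = (\<Sum>t\<in>{1..n}. q t a)"
proof (induction n)
  case 0 then show ?case by simp
next
  case (Suc n)
  have "{1..Suc n} = insert (Suc n) {1..n}" by auto
  have e: "th q (Suc (Suc n)) a = ((real (Suc n) - 1) * th q (Suc n) a + q (Suc n) a) / real (Suc n)"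
    by (simp only: th.simps) simp
  have "real (Suc n) * th q (Suc (Suc n)) a = real n * th q (Suc n) a + q (Suc n) a"
    unfolding e by (simp add: field_simps)
  then show ?case using Suc \<open>{1..Suc n} = _\<close> by simp
qed

lemma th_diff: "1 \<le> t \<Longrightarrow> th q (Suc t) a - th q t a = (q t a - th q t a) / real t"
  by (simp add: field_simps)

lemma th_bounds:
  assumes "\<And>t. 1 \<le> t \<Longrightarrow> 0 \<le> q t a \<and> q t a \<le> 1" and "1 \<le> t"
  shows "0 \<le> th q t a \<and> th q t a \<le> 1"
  using assms(2)
proof (induction t rule: dec_induct)
  case base then show ?case by simp
next
  case (step n)
  have n: "1 \<le> real n" using step by simp
  have q: "0 \<le> q n a" "q n a \<le> 1" using assms(1)[OF step(1)] by auto
  have "0 \<le> (real n - 1) * th q n a" using n step.IH by simp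
  moreover have "(real n - 1) * th q n a \<le> real n - 1" using n step.IH by (simp add: mult_left_le)
  ultimately show ?case using step(1) q n by (auto simp: field_simps)
qed

locale gm =
  fixes m :: nat and A :: "nat \<Rightarrow> 'a set" and rf :: "nat \<Rightarrow> 'x \<Rightarrow> 'a \<Rightarrow> real"
    and \<eta> :: real and Q :: "nat \<Rightarrow> 'x \<Rightarrow> (nat \<Rightarrow> 'a) \<Rightarrow> real"
  assumes finA: "\<And>j. j < m \<Longrightarrow> finite (A j)"
    and neA: "\<And>j. j < m \<Longrightarrow> A j \<noteq> {}"
    and rpos: "\<And>j y a. j < m \<Longrightarrow> a \<in> A j \<Longrightarrow> 0 < rf j y a"
    and rsum: "\<And>j y. j < m \<Longrightarrow> (\<Sum>a\<in>A j. rf j y a) = 1"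
    and Qb: "\<And>j y a. j < m \<Longrightarrow> a \<in> joint_actions m A \<Longrightarrow> 0 \<le> Q j y a \<and> Q j y a \<le> 1"
    and eta: "0 < \<eta>"
begin

abbreviation P where "P t \<equiv> gamd m A rf \<eta> Q t"

lemma gamd_Suc: "1 \<le> t \<Longrightarrow> P (Suc t) = gamd_step m A rf \<eta> Q t (P t)"
  by simp

lemma gamd_dist:
  assumes "1 \<le> t" "j < m"
  shows "(\<forall>a\<in>A j. 0 < P t j y a) \<and> (\<Sum>a\<in>A j. P t j y a) = 1"
  using assms(1) assms(2)
proof (induction t arbitrary: j y rule: dec_induct)
  case base
  then show ?case using rpos rsum by simp
next
  case (step n)
  define w where "w = (\<lambda>b. rf j y b powr (1 / real n) * P n j y b powr ((real n - 1) / real n)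
                   * exp (\<eta> / real n * qbar m A Q (P n) j y b))"
  have wpos: "0 < w b" if "b \<in> A j" for b
  proof -
    have "0 < rf j y b" using rpos[OF step.prems that] .
    moreover have "0 < P n j y b" using step.IH[OF step.prems] that by auto
    ultimately show ?thesis unfolding w_def by (intro mult_pos_pos) auto
  qed
  have sw: "0 < (\<Sum>b\<in>A j. w b)" using wpos finA[OF step.prems] neA[OF step.prems]
    by (intro sum_pos) auto
  have eq: "P (Suc n) j y a = w a / (\<Sum>b\<in>A j. w b)" for a
    using step.hyps unfolding gamd_Suc[OF step.hyps(1)] gamd_step_def Let_def w_def by simp
  show ?case
    using wpos sw by (simp only: eq) (simp add: sum_divide_distrib[symmetric])
qed

end

locale gmi = gm m A rf \<eta> Q for m :: nat and A :: "nat \<Rightarrow> 'a set" and rf :: "nat \<Rightarrow> 'x \<Rightarrow> 'a \<Rightarrow> real"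
    and \<eta> :: real and Q :: "nat \<Rightarrow> 'x \<Rightarrow> (nat \<Rightarrow> 'a) \<Rightarrow> real" +
  fixes i :: nat
  assumes im: "i < m"
begin

abbreviation S where "S \<equiv> {..<m} - {i}"

lemma Sins: "{..<m} = insert i S" using im by auto

lemma prod_split: "(\<Prod>j\<in>{..<m}. f j ((b(i := ai)) j)) = f i ai * (\<Prod>j\<in>S. f j (b j))"
proof -
  have "(\<Prod>j\<in>{..<m}. f j ((b(i := ai)) j)) = f i ai * (\<Prod>j\<in>S. f j ((b(i := ai)) j))"
    using prod.remove[of "{..<m}" i "\<lambda>j. f j ((b(i := ai)) j)"] im by simp
  also have "(\<Prod>j\<in>S. f j ((b(i := ai)) j)) = (\<Prod>j\<in>S. f j (b j))"
    by (intro prod.cong) auto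
  finally show ?thesis .
qed

lemma joint_mem: "b \<in> other_actions m A i \<Longrightarrow> ai \<in> A i \<Longrightarrow> b(i := ai) \<in> joint_actions m A"
  unfolding other_actions_def joint_actions_def by (subst Sins) (rule PiE_fun_upd)

lemma restrict_upd: "b \<in> other_actions m A i \<Longrightarrow> restrict (b(i := ai)) S = b"
  unfolding other_actions_def by (auto simp: PiE_def extensional_def restrict_def)

lemma restrict_O: "b \<in> other_actions m A i \<Longrightarrow> restrict b S = b"
  unfolding other_actions_def by (auto simp: PiE_def extensional_def restrict_def)

lemma sum_joint:
  "(\<Sum>a\<in>joint_actions m A. g a) = (\<Sum>ai\<in>A i. \<Sum>b\<in>other_actions m A i. g (b(i := ai)))"
  unfolding joint_actions_def other_actions_def by (subst Sins) (rule sum_PiE_split; simp)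

lemma finO: "finite (other_actions m A i)"
  unfolding other_actions_def using finA by (intro finite_PiE) auto

lemma other_norm: "1 \<le> t \<Longrightarrow> (\<Sum>b\<in>other_actions m A i. \<Prod>j\<in>S. P t j y (b j)) = 1"
  unfolding other_actions_def using finA gamd_dist by (intro sum_prod_PiE_one) auto

lemma other_nonneg: "1 \<le> t \<Longrightarrow> b \<in> other_actions m A i \<Longrightarrow> 0 \<le> (\<Prod>j\<in>S. P t j y (b j))"
  unfolding other_actions_def using gamd_dist
  by (intro prod_nonneg) (auto simp: PiE_def Pi_def less_imp_le)

lemma q_bounds:
  assumes t: "1 \<le> t" and ai: "ai \<in> A i"
  shows "0 \<le> qbar m A Q (P t) i y ai" "qbar m A Q (P t) i y ai \<le> 1"
proof -
  have Qb': "0 \<le> Q i y (b(i := ai)) \<and> Q i y (b(i := ai)) \<le> 1" if "b \<in> other_actions m A i" for b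
    using Qb[OF im joint_mem[OF that ai]] .
  show "0 \<le> qbar m A Q (P t) i y ai"
    unfolding qbar_def using Qb' other_nonneg[OF t] by (intro sum_nonneg mult_nonneg_nonneg) auto
  have "qbar m A Q (P t) i y ai \<le> (\<Sum>b\<in>other_actions m A i. (\<Prod>j\<in>S. P t j y (b j)) * 1)"
    unfolding qbar_def using Qb' other_nonneg[OF t] by (intro sum_mono mult_left_mono) auto
  then show "qbar m A Q (P t) i y ai \<le> 1" using other_norm[OF t] by simp
qed

abbreviation pb where "pb T x \<equiv> pibar m A rf \<eta> Q T x"
abbreviation nu where "nu T x \<equiv> marg_others m A (pb T x) i"
abbreviation qq where "qq t x \<equiv> qbar m A Q (P t) i x"
abbreviation OA where "OA \<equiv> other_actions m A i"

lemma pb_upd: "pb T x (b(i := ai)) = (1 / real T) * (\<Sum>t\<in>{1..T}. P t i x ai * (\<Prod>j\<in>S. P t j x (b j)))"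
  unfolding pibar_def by (intro arg_cong[where f="\<lambda>z. 1 / real T * z"] sum.cong refl) (rule prod_split)

lemma marg_pb: "marg m A (pb T x) i ai = (1 / real T) * (\<Sum>t\<in>{1..T}. P t i x ai)"
proof -
  have "marg m A (pb T x) i ai = (1 / real T) * (\<Sum>t\<in>{1..T}. P t i x ai * (\<Sum>b\<in>OA. \<Prod>j\<in>S. P t j x (b j)))"
    unfolding marg_def pb_upd sum_distrib_left by (rule sum.swap)
  also have "\<dots> = (1 / real T) * (\<Sum>t\<in>{1..T}. P t i x ai)"
    by (intro arg_cong[where f="\<lambda>z. 1 / real T * z"] sum.cong refl) (simp add: other_norm)
  finally show ?thesis .
qed

lemma nu_eq: "nu T x b = (1 / real T) * (\<Sum>t\<in>{1..T}. \<Prod>j\<in>S. P t j x (b j))"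
proof -
  have "nu T x b = (1 / real T) * (\<Sum>t\<in>{1..T}. \<Sum>ai\<in>A i. P t i x ai * (\<Prod>j\<in>S. P t j x (b j)))"
    unfolding marg_others_def pb_upd sum_distrib_left[symmetric] by (subst sum.swap) simp
  also have "\<dots> = (1 / real T) * (\<Sum>t\<in>{1..T}. \<Prod>j\<in>S. P t j x (b j))"
    using gamd_dist[OF _ im] by (simp add: sum_distrib_right[symmetric])
  finally show ?thesis .
qed

lemma nu_sum: "1 \<le> T \<Longrightarrow> (\<Sum>b\<in>OA. nu T x b) = 1"
  unfolding nu_eq sum_distrib_left[symmetric] by (subst sum.swap) (simp add: other_norm)

lemma lin_nu: "(\<Sum>b\<in>OA. nu T x b * Q i x (b(i := ai))) = (1 / real T) * (\<Sum>t\<in>{1..T}. qq t x ai)"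
proof -
  have "(\<Sum>b\<in>OA. nu T x b * Q i x (b(i := ai)))
      = (\<Sum>b\<in>OA. \<Sum>t\<in>{1..T}. (1 / real T) * ((\<Prod>j\<in>S. P t j x (b j)) * Q i x (b(i := ai))))"
    unfolding nu_eq by (intro sum.cong refl) (simp add: sum_distrib_left sum_distrib_right mult_ac)
  also have "\<dots> = (\<Sum>t\<in>{1..T}. \<Sum>b\<in>OA. (1 / real T) * ((\<Prod>j\<in>S. P t j x (b j)) * Q i x (b(i := ai))))"
    by (rule sum.swap)
  also have "\<dots> = (1 / real T) * (\<Sum>t\<in>{1..T}. qq t x ai)"
    unfolding qbar_def by (simp add: sum_distrib_left)
  finally show ?thesis .
qed

lemma Vhat_prod:
  assumes T: "1 \<le> T"
  shows "Vhat m A rf \<eta> Q i x (\<lambda>a. p (a i) * nu T x (restrict a S))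
       = (1 / real T) * (\<Sum>t\<in>{1..T}. floss m A rf \<eta> Q t i x p)"
proof -
  have lin: "(\<Sum>a\<in>joint_actions m A. p (a i) * nu T x (restrict a S) * Q i x a)
      = (1 / real T) * (\<Sum>t\<in>{1..T}. \<Sum>ai\<in>A i. p ai * qq t x ai)"
  proof -
    have "(\<Sum>a\<in>joint_actions m A. p (a i) * nu T x (restrict a S) * Q i x a)
        = (\<Sum>ai\<in>A i. p ai * (\<Sum>b\<in>OA. nu T x b * Q i x (b(i := ai))))"
      unfolding sum_joint sum_distrib_left
      by (intro sum.cong refl) (simp add: restrict_upd restrict_O mult.assoc)
    also have "\<dots> = (\<Sum>ai\<in>A i. p ai * ((1 / real T) * (\<Sum>t\<in>{1..T}. qq t x ai)))"
      by (simp only: lin_nu)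
    also have "\<dots> = (1 / real T) * (\<Sum>t\<in>{1..T}. \<Sum>ai\<in>A i. p ai * qq t x ai)"
      by (subst sum.swap) (simp add: sum_distrib_left mult.left_commute)
    finally show ?thesis .
  qed
  have mg: "marg m A (\<lambda>a. p (a i) * nu T x (restrict a S)) i = p"
  proof
    fix ai
    have "marg m A (\<lambda>a. p (a i) * nu T x (restrict a S)) i ai = (\<Sum>b\<in>OA. p ai * nu T x b)"
      unfolding marg_def by (intro sum.cong refl) (simp add: restrict_upd restrict_O)
    also have "\<dots> = p ai" using nu_sum[OF T] by (simp add: sum_distrib_left[symmetric])
    finally show "marg m A (\<lambda>a. p (a i) * nu T x (restrict a S)) i ai = p ai" .
  qed
  have Tn: "real T \<noteq> 0" using T by simp
  show ?thesis
    unfolding Vhat_def lin mg floss_def sum_subtractf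
    using Tn by (simp add: right_diff_distrib)
qed

lemma lin_pb: "(\<Sum>a\<in>joint_actions m A. pb T x a * Q i x a)
   = (1 / real T) * (\<Sum>t\<in>{1..T}. \<Sum>ai\<in>A i. P t i x ai * qq t x ai)"
proof -
  have "(\<Sum>a\<in>joint_actions m A. pb T x a * Q i x a)
     = (\<Sum>ai\<in>A i. \<Sum>b\<in>OA. (1 / real T) * (\<Sum>t\<in>{1..T}. P t i x ai * (\<Prod>j\<in>S. P t j x (b j))) * Q i x (b(i := ai)))"
    unfolding sum_joint pb_upd ..
  also have "\<dots> = (1 / real T) * (\<Sum>ai\<in>A i. \<Sum>t\<in>{1..T}. P t i x ai * qq t x ai)"
    unfolding qbar_def sum_distrib_left sum_distrib_right
    by (intro sum.cong refl, subst sum.swap) (simp add: sum_distrib_left mult_ac)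
  also have "\<dots> = (1 / real T) * (\<Sum>t\<in>{1..T}. \<Sum>ai\<in>A i. P t i x ai * qq t x ai)"
    by (subst sum.swap) simp
  finally show ?thesis .
qed

abbreviation \<theta> where "\<theta> x \<equiv> th (\<lambda>t. qq t x)"
definition Z where "Z x t = (\<Sum>b\<in>A i. rf i x b * exp (\<eta> * \<theta> x t b))"

lemma finAi: "finite (A i)" using finA im by simp
lemma neAi: "A i \<noteq> {}" using neA im by simp

lemma Zpos: "0 < Z x t"
  unfolding Z_def using finAi neAi rpos[OF im] by (intro sum_pos) auto

lemma closed:
  assumes "1 \<le> t" "a \<in> A i"
  shows "P t i x a = rf i x a * exp (\<eta> * \<theta> x t a) / Z x t"
  using assms
proof (induction t arbitrary: a rule: dec_induct)
  case base then show ?case using rsum[OF im] by (simp add: Z_def)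
next
  case (step n)
  have n: "0 < real n" using step by simp
  define K where "K = exp (- ((real n - 1) / real n) * ln (Z x n))"
  define w where "w = (\<lambda>b. rf i x b powr (1 / real n) * P n i x b powr ((real n - 1) / real n)
                   * exp (\<eta> / real n * qq n x b))"
  have wb: "w b = rf i x b * exp (\<eta> * \<theta> x (Suc n) b) * K" if b: "b \<in> A i" for b
  proof -
    have r: "0 < rf i x b" using rpos[OF im b] .
    have Pn: "P n i x b = rf i x b * exp (\<eta> * \<theta> x n b) / Z x n" using step.IH[OF b] .
    have Pp: "0 < P n i x b" unfolding Pn using r Zpos by simp
    have lnP: "ln (P n i x b) = ln (rf i x b) + \<eta> * \<theta> x n b - ln (Z x n)"
      unfolding Pn using r Zpos[of x n] by (simp add: ln_div ln_mult)
    have "w b = exp (ln (rf i x b) / real n + ((real n - 1) / real n) * ln (P n i x b) + \<eta> / real n * qq n x b)"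
      unfolding w_def powr_def using r Pp by (simp add: exp_add)
    also have "ln (rf i x b) / real n + ((real n - 1) / real n) * ln (P n i x b) + \<eta> / real n * qq n x b
        = ln (rf i x b) + \<eta> * \<theta> x (Suc n) b + (- ((real n - 1) / real n) * ln (Z x n))"
      unfolding lnP using n step(1) by (simp add: field_simps)
    also have "exp \<dots> = rf i x b * exp (\<eta> * \<theta> x (Suc n) b) * K"
      unfolding K_def exp_add exp_ln[OF r] ..
    finally show ?thesis .
  qed
  have Kp: "0 < K" unfolding K_def by simp
  have eq: "P (Suc n) i x a = w a / (\<Sum>b\<in>A i. w b)"
    using step.hyps unfolding gamd_Suc[OF step.hyps(1)] gamd_step_def Let_def w_def by simp
  have "(\<Sum>b\<in>A i. w b) = Z x (Suc n) * K"
    unfolding Z_def sum_distrib_right using wb by (intro sum.cong refl) simp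
  then show ?case using eq wb[OF step.prems] Kp by simp
qed

lemma qb: "1 \<le> t \<Longrightarrow> a \<in> A i \<Longrightarrow> 0 \<le> qq t x a \<and> qq t x a \<le> 1"
  using q_bounds by auto

lemma thb: "1 \<le> t \<Longrightarrow> a \<in> A i \<Longrightarrow> 0 \<le> \<theta> x t a \<and> \<theta> x t a \<le> 1"
  by (rule th_bounds) (use qb in auto)

definition Phi where "Phi x t = real t / \<eta> * ln (Z x (Suc t))"

lemma round:
  assumes t: "1 \<le> t"
  shows "Phi x t - Phi x (t - 1) - floss m A rf \<eta> Q t i x (P t i x) \<le> 4 * \<eta> / real t"
proof -
  define p where "p = P t i x"
  define d where "d = (\<lambda>a. \<eta> * (\<theta> x (Suc t) a - \<theta> x t a))"
  have tp: "0 < real t" using t by simp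
  have pa: "p a = rf i x a * exp (\<eta> * \<theta> x t a) / Z x t" if "a \<in> A i" for a
    unfolding p_def using closed[OF t that] .
  have p0: "0 < p a" if "a \<in> A i" for a using gamd_dist[OF t im] that unfolding p_def by auto
  have p1: "(\<Sum>a\<in>A i. p a) = 1" using gamd_dist[OF t im] unfolding p_def by auto
  have dc: "\<bar>d a\<bar> \<le> \<eta> / real t" if a: "a \<in> A i" for a
  proof -
    have "d a = \<eta> * ((qq t x a - \<theta> x t a) / real t)" unfolding d_def th_diff[OF t] by simp
    moreover have "\<bar>qq t x a - \<theta> x t a\<bar> \<le> 1" using qb[OF t a, where x=x] thb[OF t a, where x=x] by auto
    ultimately show ?thesis using eta tp by (simp add: abs_mult abs_divide divide_right_mono mult_left_le)
  qed
  have R: "ln (\<Sum>a\<in>A i. p a * exp (d a)) - (\<Sum>a\<in>A i. p a * d a) \<le> 4 * (\<eta> / real t)\<^sup>2"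
    using round_bound[OF finAi _ p1 dc] p0 by (simp add: less_imp_le)
  have SA: "(\<Sum>a\<in>A i. p a * exp (d a)) = Z x (Suc t) / Z x t"
  proof -
    have "(\<Sum>a\<in>A i. p a * exp (d a)) = (\<Sum>a\<in>A i. rf i x a * exp (\<eta> * \<theta> x (Suc t) a) / Z x t)"
      by (intro sum.cong refl) (simp add: pa d_def exp_add[symmetric] algebra_simps)
    then show ?thesis unfolding Z_def[of x "Suc t"] by (simp add: sum_divide_distrib)
  qed
  have SB: "(\<Sum>a\<in>A i. p a * d a) = \<eta> / real t * ((\<Sum>a\<in>A i. p a * qq t x a) - (\<Sum>a\<in>A i. p a * \<theta> x t a))"
  proof -
    have "(\<Sum>a\<in>A i. p a * d a) = (\<Sum>a\<in>A i. \<eta> / real t * (p a * qq t x a - p a * \<theta> x t a))"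
      unfolding d_def th_diff[OF t] by (intro sum.cong refl) (simp add: field_simps)
    then show ?thesis by (simp only: sum_distrib_left[symmetric] sum_subtractf)
  qed
  have KLe: "KL (A i) p (rf i x) = \<eta> * (\<Sum>a\<in>A i. p a * \<theta> x t a) - ln (Z x t)"
  proof -
    have "KL (A i) p (rf i x) = (\<Sum>a\<in>A i. p a * (\<eta> * \<theta> x t a - ln (Z x t)))"
      unfolding KL_def
    proof (intro sum.cong refl)
      fix a assume a: "a \<in> A i"
      have r: "0 < rf i x a" using rpos[OF im a] .
      have "p a / rf i x a = exp (\<eta> * \<theta> x t a) / Z x t" using pa[OF a] r by simp
      then have "ln (p a / rf i x a) = \<eta> * \<theta> x t a - ln (Z x t)" using Zpos[of x t] by (simp add: ln_div)
      then show "(if p a = 0 then 0 else p a * ln (p a / rf i x a)) = p a * (\<eta> * \<theta> x t a - ln (Z x t))"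
        using p0[OF a] by simp
    qed
    also have "\<dots> = \<eta> * (\<Sum>a\<in>A i. p a * \<theta> x t a) - ln (Z x t)"
      using p1 by (simp add: right_diff_distrib sum_subtractf sum_distrib_left sum_distrib_right[symmetric] mult_ac)
    finally show ?thesis .
  qed
  have lnq: "ln (Z x (Suc t) / Z x t) = ln (Z x (Suc t)) - ln (Z x t)"
    using Zpos[of x t] Zpos[of x "Suc t"] by (simp add: ln_div)
  define a1 where "a1 = ln (Z x (Suc t))"
  define a0 where "a0 = ln (Z x t)"
  define sq where "sq = (\<Sum>a\<in>A i. p a * qq t x a)"
  define s\<theta> where "s\<theta> = (\<Sum>a\<in>A i. p a * \<theta> x t a)"
  have R': "a1 - a0 - \<eta> / real t * (sq - s\<theta>) \<le> 4 * (\<eta> / real t)\<^sup>2"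
    using R unfolding SA SB lnq a1_def a0_def sq_def s\<theta>_def .
  have "real t / \<eta> * (a1 - a0 - \<eta> / real t * (sq - s\<theta>)) \<le> real t / \<eta> * (4 * (\<eta> / real t)\<^sup>2)"
    using R' eta tp by (intro mult_left_mono) auto
  moreover have "real t / \<eta> * (4 * (\<eta> / real t)\<^sup>2) = 4 * \<eta> / real t"
    using eta tp by (simp add: power2_eq_square field_simps)
  moreover have "Phi x t - Phi x (t - 1) - floss m A rf \<eta> Q t i x (P t i x)
      = real t / \<eta> * (a1 - a0 - \<eta> / real t * (sq - s\<theta>))"
    unfolding Phi_def floss_def p_def[symmetric] KLe a1_def[symmetric] sq_def[symmetric] s\<theta>_def[symmetric]
    using t eta tp by (simp add: of_nat_diff a0_def field_simps)
  ultimately show ?thesis by simp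
qed

lemma sum_round:
  assumes T: "1 \<le> T"
  shows "Phi x T - 4 * (\<eta> * (1 + ln (real T))) \<le> (\<Sum>t\<in>{1..T}. floss m A rf \<eta> Q t i x (P t i x))"
proof -
  have "(\<Sum>t\<in>{1..T}. Phi x t - Phi x (t - 1) - floss m A rf \<eta> Q t i x (P t i x))
      \<le> (\<Sum>t\<in>{1..T}. 4 * \<eta> * (1 / real t))"
    using round by (intro sum_mono) simp
  also have "\<dots> = 4 * \<eta> * (\<Sum>t\<in>{1..T}. 1 / real t)" by (simp add: sum_distrib_left)
  also have "\<dots> \<le> 4 * \<eta> * (1 + ln (real T))"
    using harm_bound[OF T] eta by (intro mult_left_mono) auto
  finally have a: "(\<Sum>t\<in>{1..T}. Phi x t - Phi x (t - 1)) - (\<Sum>t\<in>{1..T}. floss m A rf \<eta> Q t i x (P t i x))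
      \<le> 4 * \<eta> * (1 + ln (real T))"
    by (simp add: sum_subtractf)
  have "(\<Sum>t\<in>{1..T}. Phi x t - Phi x (t - 1)) = Phi x T - Phi x 0"
    using sum_telescope''[of 0 T "Phi x"] by simp
  then show ?thesis using a by (simp add: Phi_def)
qed

lemma sup_bound:
  assumes T: "1 \<le> T" and p: "p \<in> prob_simplex (A i)"
  shows "(1 / real T) * (\<Sum>t\<in>{1..T}. floss m A rf \<eta> Q t i x p) \<le> Phi x T / real T"
proof -
  have Tp: "0 < real T" using T by simp
  have "(\<Sum>t\<in>{1..T}. floss m A rf \<eta> Q t i x p)
      = (\<Sum>a\<in>A i. p a * (\<Sum>t\<in>{1..T}. qq t x a)) - real T * KL (A i) p (rf i x) / \<eta>"
    unfolding floss_def sum_subtractf sum_distrib_left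
    by (subst sum.swap) simp
  also have "\<dots> = real T / \<eta> * ((\<Sum>a\<in>A i. p a * (\<eta> * \<theta> x (Suc T) a)) - KL (A i) p (rf i x))"
  proof -
    have "(\<Sum>a\<in>A i. p a * (\<Sum>t\<in>{1..T}. qq t x a)) = real T / \<eta> * (\<Sum>a\<in>A i. p a * (\<eta> * \<theta> x (Suc T) a))"
    proof -
      have pw: "p a * (\<Sum>t\<in>{1..T}. qq t x a) = real T / \<eta> * (p a * (\<eta> * \<theta> x (Suc T) a))" for a
      proof -
        have h: "(\<Sum>t\<in>{1..T}. qq t x a) = real T * \<theta> x (Suc T) a"
          using th_sum[of T "\<lambda>t. qq t x" a, symmetric] by (simp del: th.simps)
        show ?thesis unfolding h using eta by (simp del: th.simps)
      qed
      have "(\<Sum>a\<in>A i. p a * (\<Sum>t\<in>{1..T}. qq t x a)) = (\<Sum>a\<in>A i. real T / \<eta> * (p a * (\<eta> * \<theta> x (Suc T) a)))"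
        by (rule sum.cong[OF refl pw])
      then show ?thesis by (simp only: sum_distrib_left)
    qed
    then show ?thesis using eta by (simp add: right_diff_distrib)
  qed
  also have "\<dots> \<le> real T / \<eta> * ln (\<Sum>a\<in>A i. rf i x a * exp (\<eta> * \<theta> x (Suc T) a))"
    using gibbs[OF finAi _ p neAi, of "rf i x" "\<lambda>a. \<eta> * \<theta> x (Suc T) a"] rpos[OF im] eta Tp
    by (intro mult_left_mono) auto
  also have "\<dots> = Phi x T" unfolding Phi_def Z_def ..
  finally show ?thesis using Tp by (simp add: divide_right_mono)
qed

lemma simplex_ne: "prob_simplex (A i) \<noteq> {}"
proof -
  have "(\<lambda>a. if a \<in> A i then rf i x a else 0) \<in> prob_simplex (A i)"
    unfolding prob_simplex_def using rpos[OF im] rsum[OF im, of x]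
    by (auto simp: less_imp_le intro: sum.cong)
  then show ?thesis by blast
qed

lemma final:
  assumes T: "1 \<le> T"
  shows "(let pb = pibar m A rf \<eta> Q T x;
          reg = (SUP p\<in>prob_simplex (A i). (1 / real T) * (\<Sum>t\<in>{1..T}. floss m A rf \<eta> Q t i x p))
                - (1 / real T) * (\<Sum>t\<in>{1..T}. floss m A rf \<eta> Q t i x (gamd m A rf \<eta> Q t i x))
      in Vdag m A rf \<eta> Q i x (marg_others m A pb i) - Vhat m A rf \<eta> Q i x pb \<le> reg
         \<and> reg \<le> 4 * (\<eta> * (1 + ln (real T)) / real T))"
proof -
  have Tp: "0 < real T" using T by simp
  define F where "F = (\<lambda>p. (1 / real T) * (\<Sum>t\<in>{1..T}. floss m A rf \<eta> Q t i x p))"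
  define G where "G = (1 / real T) * (\<Sum>t\<in>{1..T}. floss m A rf \<eta> Q t i x (P t i x))"
  have Vd: "Vdag m A rf \<eta> Q i x (nu T x) = (SUP p\<in>prob_simplex (A i). F p)"
    unfolding Vdag_def F_def using Vhat_prod[OF T] by simp
  have SUPle: "(SUP p\<in>prob_simplex (A i). F p) \<le> Phi x T / real T"
    unfolding F_def using simplex_ne sup_bound[OF T] by (intro cSUP_least) auto
  have Gge: "Phi x T / real T - 4 * (\<eta> * (1 + ln (real T)) / real T) \<le> G"
    unfolding G_def using divide_right_mono[OF sum_round[OF T, of x], of T] Tp
    by (simp add: diff_divide_distrib)
  have mg: "marg m A (pb T x) i = (\<lambda>a. (1 / real (card {1..T})) * (\<Sum>t\<in>{1..T}. P t i x a))"
    by (rule ext) (simp add: marg_pb)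
  have KLle: "KL (A i) (marg m A (pb T x) i) (rf i x) \<le> (1 / real T) * (\<Sum>t\<in>{1..T}. KL (A i) (P t i x) (rf i x))"
    unfolding mg using kl_avg[OF finAi _ _ rpos[OF im], where I="{1..T}" and P="\<lambda>t. P t i x"] T gamd_dist[OF _ im]
    by auto
  have Vp: "G \<le> Vhat m A rf \<eta> Q i x (pb T x)"
  proof -
    have "G = (1 / real T) * (\<Sum>t\<in>{1..T}. \<Sum>ai\<in>A i. P t i x ai * qq t x ai)
        - ((1 / real T) * (\<Sum>t\<in>{1..T}. KL (A i) (P t i x) (rf i x))) / \<eta>"
      unfolding G_def floss_def sum_subtractf by (simp add: sum_divide_distrib right_diff_distrib mult.commute)
    moreover have "KL (A i) (marg m A (pb T x) i) (rf i x) / \<eta>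
        \<le> ((1 / real T) * (\<Sum>t\<in>{1..T}. KL (A i) (P t i x) (rf i x))) / \<eta>"
      using divide_right_mono[OF KLle, of \<eta>] eta by simp
    ultimately show ?thesis unfolding Vhat_def lin_pb by simp
  qed
  have "(SUP p\<in>prob_simplex (A i). F p) \<le> Phi x T / real T" using SUPle .
  show ?thesis
    unfolding Let_def F_def[symmetric] G_def[symmetric] Vd
    using SUPle Gge Vp by simp
qed

end

theorem mainTheorem11:
  "\<exists>C::real. \<forall>(m::nat) (A::nat \<Rightarrow> 'a set) (rf::nat \<Rightarrow> 'x \<Rightarrow> 'a \<Rightarrow> real) (\<eta>::real)
      (Q::nat \<Rightarrow> 'x \<Rightarrow> (nat \<Rightarrow> 'a) \<Rightarrow> real) (T::nat) (i::nat) (x::'x).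
     (\<forall>j<m. finite (A j) \<and> A j \<noteq> {}) \<longrightarrow>
     (\<forall>j<m. \<forall>y. (\<forall>a\<in>A j. 0 < rf j y a) \<and> (\<Sum>a\<in>A j. rf j y a) = 1) \<longrightarrow>
     (\<forall>j<m. \<forall>y. \<forall>a\<in>joint_actions m A. 0 \<le> Q j y a \<and> Q j y a \<le> 1) \<longrightarrow>
     0 < \<eta> \<longrightarrow> 1 \<le> T \<longrightarrow> i < m \<longrightarrow>
     (let pb = pibar m A rf \<eta> Q T x;
          reg = (SUP p\<in>prob_simplex (A i). (1 / real T) * (\<Sum>t\<in>{1..T}. floss m A rf \<eta> Q t i x p))
                - (1 / real T) * (\<Sum>t\<in>{1..T}. floss m A rf \<eta> Q t i x (gamd m A rf \<eta> Q t i x))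
      in Vdag m A rf \<eta> Q i x (marg_others m A pb i) - Vhat m A rf \<eta> Q i x pb \<le> reg
         \<and> reg \<le> C * (\<eta> * (1 + ln (real T)) / real T))"
proof (rule exI[of _ 4], intro allI impI)
  fix m :: nat and A :: "nat \<Rightarrow> 'a set" and rf :: "nat \<Rightarrow> 'x \<Rightarrow> 'a \<Rightarrow> real" and \<eta> :: real
    and Q :: "nat \<Rightarrow> 'x \<Rightarrow> (nat \<Rightarrow> 'a) \<Rightarrow> real" and T i :: nat and x :: 'x
  assume h1: "\<forall>j<m. finite (A j) \<and> A j \<noteq> {}"
    and h2: "\<forall>j<m. \<forall>y. (\<forall>a\<in>A j. 0 < rf j y a) \<and> (\<Sum>a\<in>A j. rf j y a) = 1"
    and h3: "\<forall>j<m. \<forall>y. \<forall>a\<in>joint_actions m A. 0 \<le> Q j y a \<and> Q j y a \<le> 1"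
    and h4: "0 < \<eta>" and h5: "1 \<le> T" and h6: "i < m"
  interpret gmi m A rf \<eta> Q i
    by unfold_locales (use h1 h2 h3 h4 h6 in auto)
  show "let pb = pibar m A rf \<eta> Q T x;
          reg = (SUP p\<in>prob_simplex (A i). (1 / real T) * (\<Sum>t\<in>{1..T}. floss m A rf \<eta> Q t i x p))
                - (1 / real T) * (\<Sum>t\<in>{1..T}. floss m A rf \<eta> Q t i x (gamd m A rf \<eta> Q t i x))
      in Vdag m A rf \<eta> Q i x (marg_others m A pb i) - Vhat m A rf \<eta> Q i x pb \<le> reg
         \<and> reg \<le> 4 * (\<eta> * (1 + ln (real T)) / real T)"
    using final[OF h5, of x] .
qed

end
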